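(* Let $G$ be a graph and $a\neq b$ vertices of $G$. The pair state $e_a-e_b$ is fixed if and only if $a$ and $b$ are twins in $G$, i.e. $N(a)\setminus\{b\}=N(b)\setminus\{a\}$.
   Context: $N(v)$ denotes the set of neighbours of $v$. With $L=\Delta-A$ the Laplacian of $G$ and $U(t)=\exp(itL)$, the pair state $e_a-e_b$ is fixed if for every $t\ge 0$ there is $\gamma\in\mathbb{C}$ with $|\gamma|=1$ (possibly depending on $t$) such that $U(t)(e_a-e_b)=\gamma(e_a-e_b)$. *)

theory Defs
  imports "HOL-Analysis.Analysis"
begin

text \<open>A finite simple graph: vertices form a finite type 'a, adjacency is a
symmetric irreflexive relation E.  Vectors in C^V are functions 'a => complex.\<close>

definition nbhd :: "('a \<Rightarrow> 'a \<Rightarrow> bool) \<Rightarrow> 'a \<Rightarrow> 'a set" where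
  "nbhd E v = {u. E v u}"

definition laplacian :: "('a::finite \<Rightarrow> 'a \<Rightarrow> bool) \<Rightarrow> ('a \<Rightarrow> complex) \<Rightarrow> ('a \<Rightarrow> complex)" where
  "laplacian E f = (\<lambda>x. of_nat (card (nbhd E x)) * f x - (\<Sum>y\<in>nbhd E x. f y))"

definition evolve :: "('a::finite \<Rightarrow> 'a \<Rightarrow> bool) \<Rightarrow> real \<Rightarrow> ('a \<Rightarrow> complex) \<Rightarrow> ('a \<Rightarrow> complex)" where
  "evolve E t f = (\<lambda>x. (\<Sum>k. (\<i> * complex_of_real t) ^ k / of_nat (fact k) * ((laplacian E ^^ k) f) x))"

definition unit_vec :: "'a \<Rightarrow> 'a \<Rightarrow> complex" where
  "unit_vec a = (\<lambda>x. if x = a then 1 else 0)"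

definition pair_state :: "'a \<Rightarrow> 'a \<Rightarrow> 'a \<Rightarrow> complex" where
  "pair_state a b = (\<lambda>x. unit_vec a x - unit_vec b x)"

definition pair_fixed :: "('a::finite \<Rightarrow> 'a \<Rightarrow> bool) \<Rightarrow> 'a \<Rightarrow> 'a \<Rightarrow> bool" where
  "pair_fixed E a b = (\<forall>t::real. t \<ge> 0 \<longrightarrow>
     (\<exists>\<gamma>::complex. cmod \<gamma> = 1 \<and> evolve E t (pair_state a b) = (\<lambda>x. \<gamma> * pair_state a b x)))"

end

theory Submission
  imports Defs
begin

lemma lap_scale:
  "laplacian E (\<lambda>x. c * g x) = (\<lambda>x. c * laplacian E g x)"
  unfolding laplacian_def by (auto simp: algebra_simps sum_distrib_left)

lemma lap_bound:
  fixes E :: "'a::finite \<Rightarrow> 'a \<Rightarrow> bool"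
  assumes "\<And>y. cmod (g y) \<le> B"
  shows "cmod (laplacian E g x) \<le> 2 * real CARD('a) * B"
proof -
  have B0: "0 \<le> B" using assms[of x] norm_ge_zero order_trans by blast
  have c: "real (card (nbhd E x)) \<le> real CARD('a)" by (simp add: card_mono)
  have "cmod (of_nat (card (nbhd E x)) * g x) \<le> real CARD('a) * B"
    by (simp add: norm_mult) (rule mult_mono[OF c assms[of x]]; simp)
  moreover have "cmod (\<Sum>y\<in>nbhd E x. g y) \<le> real CARD('a) * B"
  proof -
    have "cmod (\<Sum>y\<in>nbhd E x. g y) \<le> (\<Sum>y\<in>nbhd E x. cmod (g y))" by (rule norm_sum)
    also have "\<dots> \<le> (\<Sum>y\<in>nbhd E x. B)" by (rule sum_mono) (rule assms)
    also have "\<dots> = real (card (nbhd E x)) * B" by simp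
    also have "\<dots> \<le> real CARD('a) * B" using c B0 by (simp add: mult_right_mono)
    finally show ?thesis .
  qed
  ultimately show ?thesis unfolding laplacian_def
    using norm_triangle_ineq4[of "of_nat (card (nbhd E x)) * g x" "sum g (nbhd E x)"] by linarith
qed

lemma lap_pow_bound:
  fixes E :: "'a::finite \<Rightarrow> 'a \<Rightarrow> bool"
  assumes "\<And>y. cmod (g y) \<le> 1"
  shows "cmod ((laplacian E ^^ k) g x) \<le> (2 * real CARD('a)) ^ k"
proof (induction k arbitrary: x)
  case 0 then show ?case using assms by simp
next
  case (Suc k)
  have "cmod (laplacian E ((laplacian E ^^ k) g) x) \<le> 2 * real CARD('a) * (2 * real CARD('a)) ^ k"
    by (rule lap_bound) (rule Suc.IH)
  then show ?case by simp
qed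

lemma pair_state_bound: "cmod (pair_state a b y) \<le> 1"
  unfolding pair_state_def unit_vec_def by auto

lemma evolve_summable:
  fixes E :: "'a::finite \<Rightarrow> 'a \<Rightarrow> bool"
  assumes "\<And>y. cmod (g y) \<le> 1"
  shows "summable (\<lambda>k. (\<i> * complex_of_real t) ^ k / of_nat (fact k) * ((laplacian E ^^ k) g) x)"
proof -
  define M where "M = 2 * real CARD('a)"
  have S: "summable (\<lambda>k. inverse (fact k) * (\<bar>t\<bar> * M) ^ k)" by (rule summable_exp)
  have bnd:  "norm ((\<i> * complex_of_real t) ^ k / of_nat (fact k) * ((laplacian E ^^ k) g) x)
      \<le> inverse (fact k) * (\<bar>t\<bar> * M) ^ k" for k
  proof -
    have "norm ((\<i> * complex_of_real t) ^ k / of_nat (fact k) * ((laplacian E ^^ k) g) x)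
        = \<bar>t\<bar> ^ k / fact k * cmod (((laplacian E ^^ k) g) x)"
      by (simp add: norm_mult norm_divide norm_power)
    also have "\<dots> \<le> \<bar>t\<bar> ^ k / fact k * M ^ k"
      using lap_pow_bound[where E=E and g=g and k=k and x=x, OF assms] unfolding M_def
      by (intro mult_left_mono) auto
    also have "\<dots> = inverse (fact k) * (\<bar>t\<bar> * M) ^ k"
      by (simp add: power_mult_distrib field_simps)
    finally show ?thesis .
  qed
  show ?thesis
    apply (rule summable_comparison_test[where g="\<lambda>k. inverse (fact k) * (\<bar>t\<bar> * M) ^ k"])
    using bnd apply blast
    by (rule S)
qed

lemma hf: "cmod (of_nat (fact n)) = fact n"
  by (metis norm_of_nat of_nat_fact)

lemma small_coeff:
  fixes E :: "'a::finite \<Rightarrow> 'a \<Rightarrow> bool"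
  assumes gb: "\<And>y. cmod (g y) \<le> 1" and g0: "g x = 0"
    and ev: "\<And>t. 0 \<le> t \<Longrightarrow> evolve E t g x = 0"
  shows "laplacian E g x = 0"
proof -
  define M where "M = 2 * real CARD('a)"
  define c where "c k = (laplacian E ^^ k) g x" for k
  define s where "s t k = (\<i> * complex_of_real t) ^ k / of_nat (fact k) * c k" for t k
  define h where "h k = M ^ (k+2) / fact (k+2)" for k
  define K where "K = suminf h"
  have M0: "0 \<le> M" unfolding M_def by simp
  have cb: "cmod (c k) \<le> M ^ k" for k unfolding c_def M_def by (rule lap_pow_bound[OF gb])
  have hs: "summable h"
  proof -
    have "summable (\<lambda>k. inverse (fact k) * M ^ k)" by (rule summable_exp)
    then have "summable (\<lambda>k. M ^ k / fact k)" by (simp add: divide_inverse mult.commute)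
    then have "summable (\<lambda>n. (\<lambda>k. M ^ k / fact k) (n+2))" by (subst summable_iff_shift)
    then show ?thesis unfolding h_def .
  qed
  have K0: "0 \<le> K" unfolding K_def using M0 by (intro suminf_nonneg[OF hs]) (simp add: h_def)
  have key: "cmod (c 1) \<le> t * K" if t0: "0 < t" and t1: "t \<le> 1" for t
  proof -
    have ss: "summable (s t)" unfolding s_def c_def by (rule evolve_summable[OF gb])
    have nb: "norm (s t (k+2)) \<le> t^2 * h k" for k
    proof -
      have "norm (s t (k+2)) = t ^ (k+2) / fact (k+2) * cmod (c (k+2))"
        unfolding s_def norm_mult norm_divide norm_power hf using t0 by (simp add: norm_mult)
      also have "\<dots> \<le> t ^ (k+2) / fact (k+2) * M ^ (k+2)"
        using cb[of "k+2"] t0 by (intro mult_left_mono) auto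
      also have "\<dots> \<le> t^2 / fact (k+2) * M ^ (k+2)"
      proof -
        have "t ^ (k+2) = t^2 * t^k" by (simp only: power_add mult.commute)
        also have "\<dots> \<le> t^2" using t0 t1 by (simp add: power_le_one mult_left_le)
        finally show ?thesis using M0 by (intro mult_right_mono divide_right_mono) auto
      qed
      also have "\<dots> = t^2 * h k" unfolding h_def by simp
      finally show ?thesis .
    qed
    have hs2: "summable (\<lambda>k. t^2 * h k)" using hs by (rule summable_mult)
    have ns: "summable (\<lambda>k. norm (s t (k+2)))"
      by (rule summable_comparison_test[OF _ hs2]) (use nb in auto)
    have tail: "norm (\<Sum>k. s t (k+2)) \<le> t^2 * K"
    proof -
      have "norm (\<Sum>k. s t (k+2)) \<le> (\<Sum>k. norm (s t (k+2)))" by (rule summable_norm[OF ns])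
      also have "\<dots> \<le> (\<Sum>k. t^2 * h k)" by (rule suminf_le[OF nb ns hs2])
      also have "\<dots> = t^2 * K" unfolding K_def using suminf_mult[OF hs, of "t^2"] by simp
      finally show ?thesis .
    qed
    have "0 = evolve E t g x" using ev t0 by simp
    also have "\<dots> = suminf (s t)" unfolding evolve_def s_def c_def by simp
    also have "\<dots> = (\<Sum>k. s t (k+2)) + sum (s t) {..<2}" by (rule suminf_split_initial_segment[OF ss])
    also have "sum (s t) {..<2} = \<i> * complex_of_real t * c 1"
      unfolding s_def using g0 by (simp add: c_def numeral_2_eq_2)
    finally have "\<i> * complex_of_real t * c 1 = - (\<Sum>k. s t (k+2))" by (metis add.commute add_eq_0_iff)
    then have "cmod (\<i> * complex_of_real t * c 1) = cmod (\<Sum>k. s t (k+2))" by simp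
    moreover have "cmod (\<i> * complex_of_real t * c 1) = t * cmod (c 1)" using t0 by (simp add: norm_mult)
    ultimately have "t * cmod (c 1) \<le> t^2 * K" using tail by simp
    then have "t * cmod (c 1) \<le> t * (t * K)" by (simp add: power2_eq_square)
    then show ?thesis using t0 by simp
  qed
  have "cmod (c 1) = 0"
  proof (rule ccontr)
    assume "cmod (c 1) \<noteq> 0"
    then have p: "cmod (c 1) > 0" by simp
    define t where "t = min 1 (cmod (c 1) / (K + 1))"
    have t0: "0 < t" unfolding t_def using p K0 by simp
    have "cmod (c 1) \<le> t * K" using key[OF t0] t_def by simp
    also have "\<dots> \<le> cmod (c 1) / (K + 1) * K" unfolding t_def using K0 by (intro mult_right_mono) auto
    also have "\<dots> < cmod (c 1)" using p K0 by (simp add: field_simps)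
    finally show False by simp
  qed
  then show ?thesis unfolding c_def by simp
qed

lemma sum_pair:
  fixes S :: "'a::finite set"
  shows "(\<Sum>y\<in>S. pair_state a b y) = (if a \<in> S then 1 else 0) - (if b \<in> S then 1 else 0)"
  unfolding pair_state_def unit_vec_def by (simp add: sum_subtractf sum.delta')

lemma lap_pair:
  fixes E :: "'a::finite \<Rightarrow> 'a \<Rightarrow> bool"
  shows "laplacian E (pair_state a b) x = of_nat (card (nbhd E x)) * pair_state a b x
     - ((if E x a then 1 else 0) - (if E x b then 1 else 0))"
  unfolding laplacian_def sum_pair by (simp add: nbhd_def)

lemma lap_pow_eig:
  assumes "laplacian E g = (\<lambda>x. c * g x)"
  shows "(laplacian E ^^ k) g = (\<lambda>x. c ^ k * g x)"
proof (induction k)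
  case 0 then show ?case by simp
next
  case (Suc k)
  have "(laplacian E ^^ Suc k) g = laplacian E (\<lambda>x. c ^ k * g x)" using Suc by simp
  also have "\<dots> = (\<lambda>x. c ^ k * laplacian E g x)" by (rule lap_scale)
  also have "\<dots> = (\<lambda>x. c ^ Suc k * g x)" by (simp add: assms mult_ac)
  finally show ?case .
qed

theorem mainTheorem9:
  fixes E :: "'a::finite \<Rightarrow> 'a \<Rightarrow> bool" and a b :: 'a
  assumes sym: "\<And>x y. E x y \<Longrightarrow> E y x"
    and irrefl: "\<And>x. \<not> E x x"
    and ab: "a \<noteq> b"
  shows "pair_fixed E a b \<longleftrightarrow> nbhd E a - {b} = nbhd E b - {a}"
proof
  assume pf: "pair_fixed E a b"
  have eq: "E x a = E x b" if xa: "x \<noteq> a" and xb: "x \<noteq> b" for x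
  proof -
    have g0: "pair_state a b x = 0" using xa xb by (simp add: pair_state_def unit_vec_def)
    have ev: "evolve E t (pair_state a b) x = 0" if "0 \<le> t" for t
    proof -
      have "\<exists>\<gamma>::complex. cmod \<gamma> = 1 \<and> evolve E t (pair_state a b) = (\<lambda>x. \<gamma> * pair_state a b x)"
        using pf[unfolded pair_fixed_def, rule_format, OF that] .
      then obtain \<gamma> where h: "evolve E t (pair_state a b) = (\<lambda>x. \<gamma> * pair_state a b x)"
        by (elim exE conjE)
      have "evolve E t (pair_state a b) x = \<gamma> * pair_state a b x" by (rule fun_cong[OF h])
      then show ?thesis using g0 by (simp only: mult_zero_right)
    qed
    have "laplacian E (pair_state a b) x = 0"
      by (rule small_coeff[OF pair_state_bound g0 ev])
    then show ?thesis using g0 unfolding lap_pair by (auto split: if_splits)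
  qed
  show "nbhd E a - {b} = nbhd E b - {a}"
  proof (intro set_eqI iffI)
    fix u assume "u \<in> nbhd E a - {b}"
    then have "E a u" "u \<noteq> b" "u \<noteq> a" using irrefl by (auto simp: nbhd_def)
    then show "u \<in> nbhd E b - {a}" using eq[of u] sym[of a u] sym[of u b] by (auto simp: nbhd_def)
  next
    fix u assume "u \<in> nbhd E b - {a}"
    then have "E b u" "u \<noteq> b" "u \<noteq> a" using irrefl by (auto simp: nbhd_def)
    then show "u \<in> nbhd E a - {b}" using eq[of u] sym[of b u] sym[of u a] by (auto simp: nbhd_def)
  qed
next
  assume tw: "nbhd E a - {b} = nbhd E b - {a}"
  define d where "d = card (nbhd E a) + (if E a b then 1 else 0)"
  define lam where "lam = (of_nat d :: complex)"
  have Eab: "E a b = E b a" using sym by blast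
  have cda: "card (nbhd E a) = card (nbhd E a - {b}) + (if E a b then 1 else 0)"
  proof (cases "E a b")
    case True
    then have "b \<in> nbhd E a" by (simp add: nbhd_def)
    from card_Suc_Diff1[OF finite this] True show ?thesis by simp
  next
    case False
    then have "b \<notin> nbhd E a" by (simp add: nbhd_def)
    then show ?thesis using False by simp
  qed
  have cdb: "card (nbhd E b) = card (nbhd E b - {a}) + (if E b a then 1 else 0)"
  proof (cases "E b a")
    case True
    then have "a \<in> nbhd E b" by (simp add: nbhd_def)
    from card_Suc_Diff1[OF finite this] True show ?thesis by simp
  next
    case False
    then have "a \<notin> nbhd E b" by (simp add: nbhd_def)
    then show ?thesis using False by simp
  qed
  have cd: "card (nbhd E b) = card (nbhd E a)" using cda cdb tw Eab by simp
  have lapf: "laplacian E (pair_state a b) = (\<lambda>x. lam * pair_state a b x)"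
  proof
    fix x
    show "laplacian E (pair_state a b) x = lam * pair_state a b x"
    proof (cases "x = a")
      case True then show ?thesis using irrefl[of a] ab Eab
        unfolding lap_pair lam_def d_def by (simp add: pair_state_def unit_vec_def)
    next
      case xa: False
      show ?thesis
      proof (cases "x = b")
        case True then show ?thesis using irrefl[of b] ab xa cd Eab
          unfolding lap_pair lam_def d_def by (simp add: pair_state_def unit_vec_def)
      next
        case xb: False
        have "E a x = E b x" using tw xa xb by (auto simp: nbhd_def set_eq_iff)
        then have "E x a = E x b" using sym[of a x] sym[of x a] sym[of b x] sym[of x b] by blast
        then show ?thesis using xa xb
          unfolding lap_pair by (simp add: pair_state_def unit_vec_def)
      qed
    qed
  qed
  show "pair_fixed E a b"
    unfolding pair_fixed_def
  proof (intro allI impI)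
    fix t :: real
    define z where "z = \<i> * complex_of_real (t * real d)"
    have "evolve E t (pair_state a b) = (\<lambda>x. exp z * pair_state a b x)"
    proof
      fix x
      have "(\<lambda>k. z ^ k /\<^sub>R fact k * pair_state a b x) sums (exp z * pair_state a b x)"
        by (rule sums_mult2[OF exp_converges])
      moreover have "z ^ k /\<^sub>R fact k * pair_state a b x =
          (\<i> * complex_of_real t) ^ k / of_nat (fact k) * ((laplacian E ^^ k) (pair_state a b)) x" for k
        unfolding lap_pow_eig[OF lapf] z_def lam_def
        by (simp add: scaleR_conv_of_real power_mult_distrib divide_inverse)
      ultimately have "(\<lambda>k. (\<i> * complex_of_real t) ^ k / of_nat (fact k) * ((laplacian E ^^ k) (pair_state a b)) x) sums (exp z * pair_state a b x)"
        by simp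
      then have "(\<Sum>k. (\<i> * complex_of_real t) ^ k / of_nat (fact k) * ((laplacian E ^^ k) (pair_state a b)) x) = exp z * pair_state a b x"
        by (rule sums_unique[symmetric])
      then show "evolve E t (pair_state a b) x = exp z * pair_state a b x"
        unfolding evolve_def by (simp only:)
    qed
    moreover have "cmod (exp z) = 1" unfolding z_def by (rule norm_exp_i_times)
    ultimately show "\<exists>\<gamma>. cmod \<gamma> = 1 \<and> evolve E t (pair_state a b) = (\<lambda>x. \<gamma> * pair_state a b x)"
      by blast
  qed
qed

end
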